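(* Let $S\subseteq \mathbb{R}^n/\mathbb{R}\mathbb{1}$ be a finite set of points and let $k\le |S|$ be a positive integer. The tropical $k$-means clustering algorithm applied to $S$ with $k$ clusters (described in the context) terminates after finitely many iterations.
   Context: $\mathbb{1}=(1,\dots,1)\in\mathbb{R}^n$, and $\mathbb{R}^n/\mathbb{R}\mathbb{1}$ is the tropical torus. The asymmetric tropical distance is $d_{\Delta}(x,y)=\sum_{i=1}^n (y_i-x_i) + n\max_{i}(x_i-y_i)$ for $x,y\in\mathbb{R}^n$; it is invariant under adding multiples of $\mathbb{1}$ to either argument and so is defined on $\mathbb{R}^n/\mathbb{R}\mathbb{1}$. A tropical linear combination of points $v_1,\dots,v_l\in\mathbb{R}^n$ is a point $\max_i (v_i+\lambda_i\mathbb{1})$ (coordinatewise maximum) with $\lambda_i\in\mathbb{R}$. For a finite set $C\subseteq\mathbb{R}^n/\mathbb{R}\mathbb{1}$, the Fermat--Weber set $\mathrm{FW}(C)$ is the set of points $y\in\mathbb{R}^n/\mathbb{R}\mathbb{1}$ minimizing $\sum_{s\in C} d_\Delta(s,y)$; it is a polytope that is also closed under tropical linear combinations, and it has a unique minimal finite set of points $v_1,\dots,v_l$ (its tropical vertices) such that every point of $\mathrm{FW}(C)$ is a tropical linear combination of $v_1,\dots,v_l$. The tropical median of $C$ is the ordinary componentwise mean $\frac1l\sum_{i=1}^l v_i$ of the tropical vertices. Tropical $k$-means clustering algorithm: choose initial centroids $c_1,\dots,c_k$ (e.g. $k$ points of $S$ chosen at random); then repeat: (A-step) for each $j$, set $C_j$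 to be the set of $s\in S$ with $j=\arg\min_{i\in[k]} d_\Delta(s,c_i)$; (M-step) for each cluster $C_j$, replace $c_j$ by the tropical median of $C_j$; stop when the cluster assignments do not change. *)

theory Defs
  imports "HOL-Analysis.Analysis"
begin

text \<open>Points of the tropical torus R^n / R1 are represented by vectors in R^n
  (type real^'n); all notions below are invariant under adding multiples of 1.\<close>

definition one_vec :: "real^'n" where
  "one_vec = (\<chi> i. 1)"

definition trop_dist :: "real^'n \<Rightarrow> real^'n \<Rightarrow> real" where
  "trop_dist x y = (\<Sum>i\<in>UNIV. y$i - x$i) + real CARD('n) * Max (range (\<lambda>i. x$i - y$i))"

definition FW :: "(real^'n) set \<Rightarrow> (real^'n) set" where
  "FW C = {y. \<forall>z. (\<Sum>s\<in>C. trop_dist s y) \<le> (\<Sum>s\<in>C. trop_dist s z)}"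

definition trop_comb :: "(real^'n) set \<Rightarrow> real^'n \<Rightarrow> bool" where
  "trop_comb V y \<longleftrightarrow> V \<noteq> {} \<and>
     (\<exists>lam :: real^'n \<Rightarrow> real. \<forall>i. y$i = Max ((\<lambda>v. v$i + lam v) ` V))"

text \<open>Canonical representative of a class in R^n/R1: coordinate sum zero.\<close>
definition normalized :: "real^'n \<Rightarrow> bool" where
  "normalized x \<longleftrightarrow> (\<Sum>i\<in>UNIV. x$i) = 0"

definition is_trop_vertex_set :: "(real^'n) set \<Rightarrow> (real^'n) set \<Rightarrow> bool" where
  "is_trop_vertex_set A V \<longleftrightarrow>
     finite V \<and> V \<subseteq> A \<and> (\<forall>v\<in>V. normalized v) \<and>
     (\<forall>y\<in>A. trop_comb V y) \<and>
     (\<forall>W. W \<subset> V \<longrightarrow> \<not> (\<forall>y\<in>A. trop_comb W y))"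

definition trop_vertices :: "(real^'n) set \<Rightarrow> (real^'n) set" where
  "trop_vertices A = (THE V. is_trop_vertex_set A V)"

definition trop_median :: "(real^'n) set \<Rightarrow> real^'n" where
  "trop_median C = (let V = trop_vertices (FW C) in (1 / real (card V)) *\<^sub>R (\<Sum>v\<in>V. v))"

definition assign :: "nat \<Rightarrow> (nat \<Rightarrow> real^'n) \<Rightarrow> real^'n \<Rightarrow> nat" where
  "assign k c s = (LEAST j. j < k \<and> (\<forall>i<k. trop_dist s (c j) \<le> trop_dist s (c i)))"

definition cluster :: "(real^'n) set \<Rightarrow> nat \<Rightarrow> (nat \<Rightarrow> real^'n) \<Rightarrow> nat \<Rightarrow> (real^'n) set" where
  "cluster S k c j = {s \<in> S. assign k c s = j}"

definition kmeans_step :: "(real^'n) set \<Rightarrow> nat \<Rightarrow> (nat \<Rightarrow> real^'n) \<Rightarrow> (nat \<Rightarrow> real^'n)" where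
  "kmeans_step S k c = (\<lambda>j. if j < k \<and> cluster S k c j \<noteq> {}
                            then trop_median (cluster S k c j) else c j)"

definition centroids :: "(real^'n) set \<Rightarrow> nat \<Rightarrow> (nat \<Rightarrow> real^'n) \<Rightarrow> nat \<Rightarrow> (nat \<Rightarrow> real^'n)" where
  "centroids S k c0 t = (kmeans_step S k ^^ t) c0"

definition kmeans_terminates :: "(real^'n) set \<Rightarrow> nat \<Rightarrow> (nat \<Rightarrow> real^'n) \<Rightarrow> bool" where
  "kmeans_terminates S k c0 \<longleftrightarrow>
     (\<exists>t. \<forall>s\<in>S. assign k (centroids S k c0 (Suc t)) s = assign k (centroids S k c0 t) s)"

end

theory Submission
  imports Defs
begin

definition fwcost :: "(real^'n) set \<Rightarrow> real^'n \<Rightarrow> real" where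
  "fwcost C y = (\<Sum>s\<in>C. trop_dist s y)"

lemma FW_iff: "y \<in> FW C \<longleftrightarrow> (\<forall>z. fwcost C y \<le> fwcost C z)"
  by (simp add: FW_def fwcost_def)

abbreviation MX :: "real^'n \<Rightarrow> real^'n \<Rightarrow> real" where
  "MX x y \<equiv> Max (range (\<lambda>i. x$i - y$i))"

lemma MX_ge: "x$i - y$i \<le> MX x y"
  by (rule Max_ge) auto

lemma td_alt: "trop_dist x y = (\<Sum>i\<in>UNIV. MX x y - (x$i - y$i))"
  by (simp add: trop_dist_def sum_subtractf algebra_simps sum.distrib)

lemma td_nonneg: "0 \<le> trop_dist x y"
  unfolding td_alt by (rule sum_nonneg) (use MX_ge in auto)

lemma td_diff: "(x$i - y$i) - (x$j - y$j) \<le> trop_dist x y"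
proof -
  have "(x$i - y$i) - (x$j - y$j) \<le> MX x y - (x$j - y$j)" using MX_ge[where x=x and y=y and i=i] by simp
  also have "\<dots> \<le> (\<Sum>i\<in>UNIV. MX x y - (x$i - y$i))"
    by (rule member_le_sum) (use MX_ge in auto)
  finally show ?thesis unfolding td_alt .
qed

lemma td_shift: "trop_dist x (y + a *\<^sub>R one_vec) = trop_dist x y"
proof -
  have e: "(\<lambda>i. x$i - (y + a *\<^sub>R one_vec)$i) = (\<lambda>i. (x$i - y$i) + (-a))"
    by (auto simp: one_vec_def)
  have "MX x (y + a *\<^sub>R one_vec) = MX x y - a"
    unfolding e using Max_add_commute[of "UNIV::'a set" "\<lambda>i. x$i - y$i" "-a"] by simp
  hence h: "\<And>i. MX x (y + a *\<^sub>R one_vec) - (x$i - (y + a *\<^sub>R one_vec)$i) = MX x y - (x$i - y$i)"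
    by (simp add: one_vec_def)
  show ?thesis unfolding td_alt by (rule sum.cong[OF refl]) (rule h)
qed

lemma fwcost_shift: "fwcost C (y + a *\<^sub>R one_vec) = fwcost C y"
  by (simp add: fwcost_def td_shift)

lemma FW_shift: "y \<in> FW C \<Longrightarrow> y + a *\<^sub>R one_vec \<in> FW C"
  by (simp add: FW_iff fwcost_shift)

lemma cont_Max: "finite I \<Longrightarrow> I \<noteq> {} \<Longrightarrow> (\<And>i. i \<in> I \<Longrightarrow> continuous_on S (g i)) \<Longrightarrow>
   continuous_on S (\<lambda>y. Max ((\<lambda>i. g i y :: real) ` I))"
proof (induction I rule: finite_ne_induct)
  case (singleton x) thus ?case by simp
next
  case (insert x F)
  have "continuous_on S (\<lambda>y. max (g x y) (Max ((\<lambda>i. g i y) ` F)))"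
    using insert by (intro continuous_on_max) auto
  thus ?case using insert by simp
qed

lemma td_cont: "continuous_on S (\<lambda>y. trop_dist x y)"
  unfolding trop_dist_def
  by (intro continuous_intros cont_Max) auto

lemma fwcost_cont: "continuous_on S (fwcost C)"
  unfolding fwcost_def by (intro continuous_intros td_cont)

definition vmin :: "real^'n \<Rightarrow> real^'n \<Rightarrow> real^'n" where
  "vmin y z = (\<chi> i. min (y$i) (z$i))"
definition vmax :: "real^'n \<Rightarrow> real^'n \<Rightarrow> real^'n" where
  "vmax y z = (\<chi> i. max (y$i) (z$i))"

lemma td_submod: "trop_dist s (vmin y z) + trop_dist s (vmax y z) \<le> trop_dist s y + trop_dist s z"
proof -
  have lin: "(\<Sum>i\<in>UNIV. vmin y z$i - s$i) + (\<Sum>i\<in>UNIV. vmax y z$i - s$i)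
      = (\<Sum>i\<in>UNIV. y$i - s$i) + (\<Sum>i\<in>UNIV. z$i - s$i)"
    unfolding sum.distrib[symmetric] by (rule sum.cong) (auto simp: vmin_def vmax_def)
  have m1: "MX s (vmin y z) \<le> max (MX s y) (MX s z)"
  proof (rule Max.boundedI)
    fix a assume "a \<in> range (\<lambda>i. s$i - vmin y z$i)"
    then obtain i where "a = s$i - vmin y z$i" by auto
    moreover have "s$i - vmin y z$i = s$i - y$i \<or> s$i - vmin y z$i = s$i - z$i"
      by (auto simp: vmin_def min_def)
    ultimately have "a \<le> MX s y \<or> a \<le> MX s z"
      using MX_ge[where x=s and y=y and i=i] MX_ge[where x=s and y=z and i=i] by auto
    thus "a \<le> max (MX s y) (MX s z)" by auto
  qed auto
  have m2: "MX s (vmax y z) \<le> min (MX s y) (MX s z)"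
  proof (rule Max.boundedI)
    fix a assume "a \<in> range (\<lambda>i. s$i - vmax y z$i)"
    then obtain i where "a = s$i - vmax y z$i" by auto
    moreover have "s$i - vmax y z$i \<le> s$i - y$i" "s$i - vmax y z$i \<le> s$i - z$i" by (simp_all add: vmax_def)
    ultimately have "a \<le> MX s y" "a \<le> MX s z" using MX_ge[where x=s and y=y and i=i] MX_ge[where x=s and y=z and i=i]
      by linarith+
    thus "a \<le> min (MX s y) (MX s z)" by simp
  qed auto
  have "real CARD('a) * MX s (vmin y z) + real CARD('a) * MX s (vmax y z)
     \<le> real CARD('a) * MX s y + real CARD('a) * MX s z"
  proof -
    have "MX s (vmin y z) + MX s (vmax y z) \<le> MX s y + MX s z" using m1 m2 by linarith
    hence "real CARD('a) * (MX s (vmin y z) + MX s (vmax y z)) \<le> real CARD('a) * (MX s y + MX s z)"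
      by (rule mult_left_mono) simp
    thus ?thesis by (simp add: algebra_simps)
  qed
  thus ?thesis using lin unfolding trop_dist_def by linarith
qed

lemma fwcost_submod: "fwcost C (vmin y z) + fwcost C (vmax y z) \<le> fwcost C y + fwcost C z"
  unfolding fwcost_def sum.distrib[symmetric] by (rule sum_mono) (rule td_submod)

lemma vmin_FW: assumes "y \<in> FW C" "z \<in> FW C" shows "vmin y z \<in> FW C"
proof -
  have "fwcost C y \<le> fwcost C (vmax y z)" using assms by (simp add: FW_iff)
  hence "fwcost C (vmin y z) \<le> fwcost C z" using fwcost_submod[of C y z] by linarith
  thus ?thesis using assms(2) unfolding FW_iff by (meson order_trans)
qed

lemma Min_FW: "finite J \<Longrightarrow> J \<noteq> {} \<Longrightarrow> (\<And>j. j \<in> J \<Longrightarrow> P j \<in> FW C) \<Longrightarrow>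
   (\<chi> i. Min ((\<lambda>j. P j $ i) ` J)) \<in> FW C"
proof (induction J rule: finite_ne_induct)
  case (singleton x)
  have "(\<chi> i. Min ((\<lambda>j. P j $ i) ` {x})) = P x" by (simp add: vec_eq_iff)
  thus ?case using singleton by simp
next
  case (insert x F)
  have eq: "(\<chi> i. Min ((\<lambda>j. P j $ i) ` insert x F)) = vmin (P x) (\<chi> i. Min ((\<lambda>j. P j $ i) ` F))"
    using insert by (simp add: vec_eq_iff vmin_def)
  moreover have "P x \<in> FW C" using insert.prems by simp
  moreover have "(\<chi> i. Min ((\<lambda>j. P j $ i) ` F)) \<in> FW C" using insert by simp
  ultimately show ?case unfolding eq by (intro vmin_FW)
qed

abbreviation mn :: "real^'n \<Rightarrow> real^'n \<Rightarrow> real" where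
  "mn y v \<equiv> Min (range (\<lambda>i. y$i - v$i))"

lemma mn_le: "mn y v \<le> y$i - v$i"
  by (rule Min_le) auto

lemma tc_char: assumes "finite V"
  shows "trop_comb V y \<longleftrightarrow> V \<noteq> {} \<and> (\<forall>j. \<exists>v\<in>V. v$j + mn y v = y$j)"
proof
  assume "trop_comb V y"
  then obtain lam where ne: "V \<noteq> {}" and l: "\<forall>i. y$i = Max ((\<lambda>v. v$i + lam v) ` V)"
    unfolding trop_comb_def by auto
  have le: "v$i + lam v \<le> y$i" if "v \<in> V" for v i
  proof -
    have "v$i + lam v \<le> Max ((\<lambda>v. v$i + lam v) ` V)" using assms that by (intro Max_ge) auto
    thus ?thesis using l[rule_format, of i] by linarith
  qed
  have "\<exists>v\<in>V. v$j + mn y v = y$j" for j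
  proof -
    have "Max ((\<lambda>v. v$j + lam v) ` V) \<in> (\<lambda>v. v$j + lam v) ` V" by (rule Max_in) (use assms ne in auto)
    hence "y$j \<in> (\<lambda>v. v$j + lam v) ` V" using l[rule_format, of j] by simp
    then obtain v where v: "v \<in> V" "y$j = v$j + lam v" by auto
    have "lam v \<le> mn y v"
    proof (rule Min.boundedI)
      fix a assume "a \<in> range (\<lambda>i. y$i - v$i)"
      then obtain i where "a = y$i - v$i" by blast
      thus "lam v \<le> a" using le[OF v(1), of i] by linarith
    qed auto
    hence "v$j + mn y v = y$j" using v mn_le[of y v j] by linarith
    thus ?thesis using v(1) by blast
  qed
  thus "V \<noteq> {} \<and> (\<forall>j. \<exists>v\<in>V. v$j + mn y v = y$j)" using ne by auto
next
  assume h: "V \<noteq> {} \<and> (\<forall>j. \<exists>v\<in>V. v$j + mn y v = y$j)"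
  have "y$i = Max ((\<lambda>v. v$i + mn y v) ` V)" for i
  proof (rule sym, rule Max_eqI)
    show "finite ((\<lambda>v. v$i + mn y v) ` V)" using assms by simp
    show "a \<le> y$i" if ain: "a \<in> (\<lambda>v. v$i + mn y v) ` V" for a
    proof -
      obtain v where "v \<in> V" "a = v$i + mn y v" using ain by blast
      thus ?thesis using mn_le[of y v i] by linarith
    qed
    obtain v where vin: "v \<in> V" and veq: "v$i + mn y v = y$i" using h by blast
    show "y$i \<in> (\<lambda>v. v$i + mn y v) ` V"
      unfolding image_iff by (rule bexI[of _ v]) (rule veq[symmetric], rule vin)
  qed
  hence A: "\<forall>i. y$i = Max ((\<lambda>v. v$i + mn y v) ` V)" by (rule allI)
  have B: "V \<noteq> {}" using h by (rule conjunct1)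
  show "trop_comb V y" unfolding trop_comb_def
    apply (rule conjI)
     apply (rule B)
    apply (rule exI[where x="\<lambda>v. mn y v"])
    apply (rule A)
    done
qed

definition nrm :: "real^'n \<Rightarrow> real^'n" where
  "nrm y = y + (- (\<Sum>i\<in>UNIV. y$i) / real CARD('n)) *\<^sub>R one_vec"

lemma cardpos: "0 < real CARD('n::finite)"
  using card_gt_0_iff[of "UNIV::'n set"] by simp

lemma sum_nrm: "(\<Sum>i\<in>UNIV. nrm (y::real^'n) $ i) = 0"
proof -
  have "real CARD('n) \<noteq> 0" using cardpos[where 'n='n] by linarith
  thus ?thesis by (simp add: nrm_def one_vec_def sum_subtractf)
qed

lemma fwcost_nonneg: "0 \<le> fwcost C y"
  unfolding fwcost_def by (rule sum_nonneg) (rule td_nonneg)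

lemma td_le_fwcost: "finite C \<Longrightarrow> s \<in> C \<Longrightarrow> trop_dist s y \<le> fwcost C y"
  unfolding fwcost_def by (rule member_le_sum) (auto intro: td_nonneg)

lemma bound:
  fixes y :: "real^'n"
  assumes "finite C" "s0 \<in> C" "fwcost C y \<le> B" "(\<Sum>i\<in>UNIV. y$i) = 0"
  shows "\<bar>y$j\<bar> \<le> B + 2 * (\<Sum>i\<in>UNIV. \<bar>s0$i\<bar>)"
proof -
  define R where "R = B + 2 * (\<Sum>i\<in>UNIV. \<bar>s0$i\<bar>)"
  have d: "y$a - y$b \<le> R" for a b
  proof -
    have "(s0$b - y$b) - (s0$a - y$a) \<le> trop_dist s0 y" by (rule td_diff)
    also have "\<dots> \<le> B" using td_le_fwcost[OF assms(1,2), of y] assms(3) by linarith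
    finally have 1: "y$a - y$b \<le> B + s0$a - s0$b" by linarith
    have "\<bar>s0$a\<bar> \<le> (\<Sum>i\<in>UNIV. \<bar>s0$i\<bar>)" "\<bar>s0$b\<bar> \<le> (\<Sum>i\<in>UNIV. \<bar>s0$i\<bar>)"
      by (rule member_le_sum; simp)+
    thus ?thesis using 1 unfolding R_def by linarith
  qed
  have N: "0 < real CARD('n)" by (rule cardpos)
  have "real CARD('n) * y$j = (\<Sum>i\<in>UNIV. y$j - y$i)"
    using assms(4) by (simp add: sum_subtractf)
  also have "\<dots> \<le> real CARD('n) * R"
    using sum_bounded_above[of UNIV "\<lambda>i. y$j - y$i" R] d by simp
  finally have u: "y$j \<le> R" using N by simp
  have "real CARD('n) * (- y$j) = (\<Sum>i\<in>UNIV. y$i - y$j)"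
    using assms(4) by (simp add: sum_subtractf)
  also have "\<dots> \<le> real CARD('n) * R"
    using sum_bounded_above[of UNIV "\<lambda>i. y$i - y$j" R] d by simp
  finally have l: "- y$j \<le> R" using N by (metis mult_le_cancel_left_pos)
  show ?thesis using u l unfolding R_def by linarith
qed

definition KK :: "real \<Rightarrow> (real^'n) set" where
  "KK R = {y. (\<Sum>i\<in>UNIV. y$i) = 0 \<and> (\<forall>j. \<bar>y$j\<bar> \<le> R)}"

lemma compact_KK: "compact (KK R :: (real^'n) set)"
unfolding compact_eq_bounded_closed proof (rule conjI[rotated])
  show "closed (KK R :: (real^'n) set)" unfolding KK_def
    by (intro closed_Collect_conj closed_Collect_eq closed_Collect_all closed_Collect_le continuous_intros)
  show "bounded (KK R :: (real^'n) set)" unfolding bounded_iff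
  proof (intro exI ballI)
    fix y :: "real^'n" assume "y \<in> KK R"
    hence "\<bar>y$i\<bar> \<le> R" for i by (simp add: KK_def)
    hence "(\<Sum>i\<in>UNIV. \<bar>y$i\<bar>) \<le> real CARD('n) * R"
      using sum_bounded_above[of UNIV "\<lambda>i. \<bar>y$i\<bar>" R] by simp
    thus "norm y \<le> real CARD('n) * R" using norm_le_l1_cart[of y] by linarith
  qed
qed

lemma closed_FW: "closed (FW C)"
proof -
  have "FW C = {y. \<forall>z. fwcost C y \<le> fwcost C z}" by (auto simp: FW_iff)
  also have "closed \<dots>"
    by (intro closed_Collect_all closed_Collect_le fwcost_cont continuous_intros)
  finally show ?thesis .
qed

lemma fwcost_nrm: "fwcost C (nrm y) = fwcost C y"
  unfolding nrm_def by (rule fwcost_shift)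

lemma FW_nrm: "y \<in> FW C \<Longrightarrow> nrm y \<in> FW C"
  unfolding nrm_def by (rule FW_shift)

lemma nrm_diff: "nrm y $ a - nrm y $ b = y$a - y$b"
  by (simp add: nrm_def one_vec_def)

lemma FW_nonempty:
  assumes "finite C" "s0 \<in> C"
  shows "\<exists>y. y \<in> FW C"
proof -
  define B where "B = fwcost C 0"
  define R where "R = B + 2 * (\<Sum>i\<in>UNIV. \<bar>s0$i\<bar>)"
  have R0: "0 \<le> R" unfolding R_def B_def using fwcost_nonneg[of C 0]
    by (smt (verit) sum_nonneg abs_ge_zero)
  have "0 \<in> KK R" using R0 by (simp add: KK_def)
  hence "KK R \<noteq> {}" by blast
  then obtain ys where ys: "ys \<in> KK R" and m: "\<forall>y\<in>KK R. fwcost C ys \<le> fwcost C y"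
    using continuous_attains_inf[OF compact_KK _ fwcost_cont] by blast
  have "fwcost C ys \<le> fwcost C z" for z
  proof (cases "fwcost C z \<le> B")
    case True
    hence "fwcost C (nrm z) \<le> B" by (simp add: fwcost_nrm)
    hence "nrm z \<in> KK R" unfolding KK_def R_def
      using bound[OF assms, of "nrm z" B] sum_nrm[of z] by blast
    thus ?thesis using m fwcost_nrm[of C z] by force
  next
    case False
    have "fwcost C ys \<le> B" using m \<open>0 \<in> KK R\<close> B_def by blast
    thus ?thesis using False by linarith
  qed
  thus ?thesis unfolding FW_iff by blast
qed

lemma FW_attain:
  fixes C :: "(real^'n) set"
  assumes "finite C" "s0 \<in> C"
  shows "\<exists>p\<in>FW C. \<forall>q\<in>FW C. p$j - p$k \<le> q$j - q$k"
proof -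
  define B where "B = fwcost C 0"
  define R where "R = B + 2 * (\<Sum>i\<in>UNIV. \<bar>s0$i\<bar>)"
  have sub: "nrm y \<in> KK R \<inter> FW C" if "y \<in> FW C" for y
  proof -
    have "fwcost C (nrm y) \<le> B" unfolding B_def using that FW_nrm[OF that] by (simp add: FW_iff)
    hence "nrm y \<in> KK R" unfolding KK_def R_def
      using bound[OF assms, of "nrm y" B] sum_nrm[of y] by blast
    thus ?thesis using FW_nrm[OF that] by blast
  qed
  obtain y0 where "y0 \<in> FW C" using FW_nonempty[OF assms] by blast
  hence ne: "KK R \<inter> FW C \<noteq> {}" using sub by blast
  have cK: "compact (KK R \<inter> FW C)" using compact_KK closed_FW by blast
  have cc: "continuous_on (KK R \<inter> FW C) (\<lambda>q::real^'n. q$j - q$k)" by (intro continuous_intros)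
  then obtain p where p: "p \<in> KK R \<inter> FW C" and m: "\<forall>q\<in>KK R \<inter> FW C. p$j - p$k \<le> q$j - q$k"
    using continuous_attains_inf[OF cK ne cc] by blast
  show ?thesis
  proof (intro bexI ballI)
    fix q assume "q \<in> FW C"
    hence "nrm q \<in> KK R \<inter> FW C" by (rule sub)
    hence "p$j - p$k \<le> nrm q $ j - nrm q $ k" using m by blast
    thus "p$j - p$k \<le> q$j - q$k" unfolding nrm_diff .
  qed (use p in blast)
qed

lemma mn_lb: "(\<And>i. c \<le> y$i - x$i) \<Longrightarrow> c \<le> mn y x"
proof (rule Min.boundedI)
  fix a assume h: "\<And>i. c \<le> y$i - x$i" and "a \<in> range (\<lambda>i. y$i - x$i)"
  then obtain i where "a = y$i - x$i" by blast
  thus "c \<le> a" using h[of i] by simp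
qed auto

lemma mn_hit: "(\<And>i. x$i + c \<le> y$i) \<Longrightarrow> y$j \<le> x$j + c \<Longrightarrow> x$j + mn y x = y$j"
proof -
  assume a: "\<And>i. x$i + c \<le> y$i" and b: "y$j \<le> x$j + c"
  have "c \<le> mn y x" by (rule mn_lb) (use a in \<open>simp add: algebra_simps\<close>)
  thus ?thesis using b mn_le[of y x j] by linarith
qed

lemma mn_below: "x$i + mn y x \<le> y$i"
  using mn_le[of y x i] by linarith

definition pt :: "(real^'n) set \<Rightarrow> 'n \<Rightarrow> 'n \<Rightarrow> real^'n" where
  "pt C j k = (SOME p. p \<in> FW C \<and> (\<forall>q\<in>FW C. p$j - p$k \<le> q$j - q$k))"

lemma pt: assumes "finite C" "s0 \<in> C"
  shows "pt C j k \<in> FW C \<and> (\<forall>q\<in>FW C. pt C j k $ j - pt C j k $ k \<le> q$j - q$k)"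
  unfolding pt_def by (rule someI_ex) (use FW_attain[OF assms, of j k] in blast)

definition gen :: "(real^'n) set \<Rightarrow> 'n \<Rightarrow> real^'n" where
  "gen C k = (\<chi> i. Min (range (\<lambda>j. (pt C j k + (- (pt C j k $ k)) *\<^sub>R one_vec) $ i)))"

lemma gen_FW: assumes "finite C" "s0 \<in> C" shows "gen C k \<in> FW C"
  unfolding gen_def
proof (rule Min_FW)
  fix j
  show "pt C j k + (- (pt C j k $ k)) *\<^sub>R one_vec \<in> FW C"
    by (rule FW_shift) (use pt[OF assms, of j k] in blast)
qed simp_all

lemma gen_kk: "gen C k $ k = 0"
proof -
  have "range (\<lambda>j. (pt C j k + (- (pt C j k $ k)) *\<^sub>R one_vec) $ k) = {0}"
    by (auto simp: one_vec_def)
  thus ?thesis unfolding gen_def by simp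
qed

lemma gen_le: assumes "finite C" "s0 \<in> C" "y \<in> FW C" shows "gen C k $ i \<le> y$i - y$k"
proof -
  have "gen C k $ i \<le> (pt C i k + (- (pt C i k $ k)) *\<^sub>R one_vec) $ i"
    unfolding gen_def by (simp add: Min_le)
  also have "\<dots> = pt C i k $ i - pt C i k $ k" by (simp add: one_vec_def)
  also have "\<dots> \<le> y$i - y$k" using pt[OF assms(1,2), of i k] assms(3) by blast
  finally show ?thesis .
qed

lemma FW_gen: assumes "finite C" "s0 \<in> C" "y \<in> FW C"
  shows "trop_comb (range (gen C)) y"
proof -
  have "\<exists>v\<in>range (gen C). v$j + mn y v = y$j" for j
  proof (rule bexI[of _ "gen C j"])
    show "gen C j $ j + mn y (gen C j) = y $ j"
    proof (rule mn_hit[where c="y$j"])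
      show "gen C j $ i + y $ j \<le> y $ i" for i using gen_le[OF assms, of j i] by linarith
      show "y $ j \<le> gen C j $ j + y $ j" by (simp add: gen_kk)
    qed
  qed simp
  moreover have "finite (range (gen C))" by simp
  ultimately show ?thesis using tc_char[of "range (gen C)" y] by blast
qed

lemma tc_nrm: assumes "finite V" "trop_comb V y" shows "trop_comb (nrm ` V) y"
proof -
  from assms have ne: "V \<noteq> {}" and h: "\<forall>j. \<exists>v\<in>V. v$j + mn y v = y$j"
    using tc_char[of V y] by blast+
  have "\<exists>w\<in>nrm ` V. w$j + mn y w = y$j" for j
  proof -
    obtain v where v: "v \<in> V" "v$j + mn y v = y$j" using h by blast
    define c where "c = - (\<Sum>i\<in>UNIV. v$i) / real CARD('a)"
    have nv: "nrm v $ i = v$i + c" for i by (simp add: nrm_def c_def one_vec_def)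
    have "nrm v $ j + mn y (nrm v) = y$j"
    proof (rule mn_hit[where c="mn y v - c"])
      show "nrm v $ i + (mn y v - c) \<le> y $ i" for i using mn_below[of v i y] nv[of i] by linarith
      show "y $ j \<le> nrm v $ j + (mn y v - c)" using v(2) nv[of j] by linarith
    qed
    thus ?thesis using v(1) by blast
  qed
  moreover have "finite (nrm ` V)" "nrm ` V \<noteq> {}" using assms(1) ne by auto
  ultimately show ?thesis using tc_char[of "nrm ` V" y] by blast
qed

lemma ex_vs: assumes "finite C" "s0 \<in> C" shows "\<exists>V. is_trop_vertex_set (FW C) V"
proof -
  define G where "G = nrm ` range (gen C)"
  have fG: "finite G" unfolding G_def by simp
  have GA: "G \<subseteq> FW C" unfolding G_def using gen_FW[OF assms] FW_nrm by blast
  have Gn: "\<forall>v\<in>G. normalized v" unfolding G_def normalized_def using sum_nrm by blast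
  have Gg: "\<forall>y\<in>FW C. trop_comb G y"
  proof
    fix y assume "y \<in> FW C"
    hence "trop_comb (range (gen C)) y" by (rule FW_gen[OF assms])
    thus "trop_comb G y" unfolding G_def by (intro tc_nrm) simp_all
  qed
  define P where "P = (\<lambda>W. W \<subseteq> G \<and> (\<forall>y\<in>FW C. trop_comb W y))"
  have "P G" unfolding P_def using Gg by blast
  from arg_min_nat_lemma[of P G card, OF this]
  obtain W where W: "P W" and Wm: "\<And>W'. P W' \<Longrightarrow> card W \<le> card W'" by blast
  have fW: "finite W" using W unfolding P_def by (intro finite_subset[OF _ fG]) blast
  show ?thesis
  proof (rule exI[of _ W], unfold is_trop_vertex_set_def, intro conjI allI impI)
    show "finite W" by fact
    show "W \<subseteq> FW C" using W GA unfolding P_def by blast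
    show "\<forall>v\<in>W. normalized v" using W Gn unfolding P_def by blast
    show "\<forall>y\<in>FW C. trop_comb W y" using W unfolding P_def by blast
    fix W' assume "W' \<subset> W"
    hence "card W' < card W" using fW by (rule psubset_card_mono[rotated])
    have "\<not> P W'"
    proof
      assume "P W'"
      hence "card W \<le> card W'" by (rule Wm)
      thus False using \<open>card W' < card W\<close> by simp
    qed
    thus "\<not> (\<forall>y\<in>FW C. trop_comb W' y)" using \<open>W' \<subset> W\<close> W unfolding P_def by blast
  qed
qed

lemma vs_sub:
  fixes A V W :: "(real^'n) set"
  assumes V: "is_trop_vertex_set A V" and W: "is_trop_vertex_set A W"
  shows "V \<subseteq> W"
proof
  fix v assume vV: "v \<in> V"
  have fV: "finite V" and fW: "finite W" using V W unfolding is_trop_vertex_set_def by blast+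
  have vA: "v \<in> A" using V vV unfolding is_trop_vertex_set_def by blast
  have vn: "normalized v" using V vV unfolding is_trop_vertex_set_def by blast
  have genV: "\<forall>y\<in>A. trop_comb V y" and genW: "\<forall>y\<in>A. trop_comb W y"
    using V W unfolding is_trop_vertex_set_def by blast+
  have minV: "\<And>U. U \<subset> V \<Longrightarrow> \<not> (\<forall>y\<in>A. trop_comb U y)"
    using V unfolding is_trop_vertex_set_def by blast
  show "v \<in> W"
  proof (rule ccontr)
    assume vW: "v \<notin> W"
    have K: "\<exists>u\<in>V - {v}. u$j + mn v u = v$j" for j
    proof -
      have "trop_comb W v" using genW vA by blast
      then obtain w where wW: "w \<in> W" and w: "w$j + mn v w = v$j" using tc_char[OF fW, of v] by blast
      have "w \<in> A" using W wW unfolding is_trop_vertex_set_def by blast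
      hence "trop_comb V w" using genV by blast
      then obtain u where uV: "u \<in> V" and u: "u$j + mn w u = w$j" using tc_char[OF fV, of w] by blast
      have le: "u$i + (mn w u + mn v w) \<le> v$i" for i
        using mn_below[of u i w] mn_below[of w i v] by linarith
      have hit: "u$j + mn v u = v$j"
        by (rule mn_hit[where c="mn w u + mn v w"], rule le) (use u w in linarith)
      show ?thesis
      proof (cases "u = v")
        case False thus ?thesis using uV hit by blast
      next
        case True
        define c where "c = mn w v"
        have u': "v$j + mn w v = w$j" using u unfolding True .
        have c0: "c + mn v w = 0" using u' w unfolding c_def by linarith
        have weq: "w$i = v$i + c" for i
          using mn_below[of v i w] mn_below[of w i v] c0 unfolding c_def by linarith
        have wn: "normalized w" using W wW unfolding is_trop_vertex_set_def by blast
        have "(\<Sum>i\<in>UNIV. w$i) = (\<Sum>i\<in>UNIV. v$i) + real CARD('n) * c"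
          by (simp add: weq sum.distrib)
        hence "real CARD('n) * c = 0" using wn vn unfolding normalized_def by simp
        hence "c = 0" using cardpos[where 'n='n] by simp
        hence "w = v" using weq by (simp add: vec_eq_iff)
        thus ?thesis using wW vW by blast
      qed
    qed
    have "\<forall>y\<in>A. trop_comb (V - {v}) y"
    proof
      fix y assume "y \<in> A"
      hence tcy: "trop_comb V y" using genV by blast
      have "\<exists>x\<in>V - {v}. x$j + mn y x = y$j" for j
      proof -
        obtain x where xV: "x \<in> V" and x: "x$j + mn y x = y$j" using tcy tc_char[OF fV, of y] by blast
        show ?thesis
        proof (cases "x = v")
          case False thus ?thesis using xV x by blast
        next
          case True
          obtain u where uV: "u \<in> V - {v}" and u: "u$j + mn v u = v$j" using K by blast
          have "u$j + mn y u = y$j"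
          proof (rule mn_hit[where c="mn v u + mn y v"])
            show "u$i + (mn v u + mn y v) \<le> y$i" for i
              using mn_below[of u i v] mn_below[of v i y] by linarith
            have x': "v$j + mn y v = y$j" using x unfolding True .
            show "y$j \<le> u$j + (mn v u + mn y v)" using u x' by linarith
          qed
          thus ?thesis using uV by blast
        qed
      qed
      moreover have "V - {v} \<noteq> {}" using K by blast
      moreover have "finite (V - {v})" using fV by simp
      ultimately show "trop_comb (V - {v}) y" using tc_char[of "V - {v}" y] by blast
    qed
    moreover have "V - {v} \<subset> V" using vV by blast
    ultimately show False using minV by blast
  qed
qed

lemma the_vs: assumes "finite C" "s0 \<in> C"
  shows "is_trop_vertex_set (FW C) (trop_vertices (FW C))"
proof -
  obtain V where V: "is_trop_vertex_set (FW C) V" using ex_vs[OF assms] by blast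
  have "\<And>W. is_trop_vertex_set (FW C) W \<Longrightarrow> W = V"
    using V vs_sub by blast
  thus ?thesis unfolding trop_vertices_def using V by (metis theI)
qed

lemma td_mean:
  fixes V :: "(real^'n) set"
  assumes fV: "finite V" and ne: "V \<noteq> {}"
  shows "real (card V) * trop_dist s ((1 / real (card V)) *\<^sub>R (\<Sum>v\<in>V. v)) \<le> (\<Sum>v\<in>V. trop_dist s v)"
proof -
  define Nv where "Nv = real (card V)"
  have Nv0: "0 < Nv" unfolding Nv_def using fV ne by (simp add: card_gt_0_iff)
  define m where "m = (1 / Nv) *\<^sub>R (\<Sum>v\<in>V. v)"
  have mi: "Nv * m$i = (\<Sum>v\<in>V. v$i)" for i
    using Nv0 by (simp add: m_def sum_component)
  have cs: "(\<Sum>v\<in>V. s$i) = Nv * s$i" for i by (simp add: Nv_def)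
  have lin: "Nv * (\<Sum>i\<in>UNIV. m$i - s$i) = (\<Sum>v\<in>V. \<Sum>i\<in>UNIV. v$i - s$i)"
  proof -
    have "Nv * (\<Sum>i\<in>UNIV. m$i - s$i) = (\<Sum>i\<in>UNIV. Nv * m$i - Nv * s$i)"
      by (simp add: sum_distrib_left algebra_simps)
    also have "\<dots> = (\<Sum>i\<in>UNIV. \<Sum>v\<in>V. v$i - s$i)"
      by (rule sum.cong) (simp_all add: mi sum_subtractf Nv_def[symmetric])
    also have "\<dots> = (\<Sum>v\<in>V. \<Sum>i\<in>UNIV. v$i - s$i)" by (rule sum.swap)
    finally show ?thesis .
  qed
  have mx: "Nv * MX s m \<le> (\<Sum>v\<in>V. MX s v)"
  proof -
    have "MX s m \<le> (\<Sum>v\<in>V. MX s v) / Nv"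
    proof (rule Max.boundedI)
      fix a assume "a \<in> range (\<lambda>i. s$i - m$i)"
      then obtain i where a: "a = s$i - m$i" by blast
      have "Nv * (s$i - m$i) = (\<Sum>v\<in>V. s$i - v$i)"
        using mi[of i] by (simp add: algebra_simps sum_subtractf Nv_def)
      also have "\<dots> \<le> (\<Sum>v\<in>V. MX s v)" by (rule sum_mono) (rule MX_ge)
      finally have "Nv * a \<le> (\<Sum>v\<in>V. MX s v)" unfolding a .
      thus "a \<le> (\<Sum>v\<in>V. MX s v) / Nv" using Nv0 by (simp add: field_simps)
    qed auto
    thus ?thesis using Nv0 by (simp add: field_simps)
  qed
  have "Nv * trop_dist s m = Nv * (\<Sum>i\<in>UNIV. m$i - s$i) + real CARD('n) * (Nv * MX s m)"
    unfolding trop_dist_def by (simp add: algebra_simps)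
  also have "\<dots> \<le> (\<Sum>v\<in>V. \<Sum>i\<in>UNIV. v$i - s$i) + real CARD('n) * (\<Sum>v\<in>V. MX s v)"
    using lin mx by (simp add: mult_left_mono)
  also have "\<dots> = (\<Sum>v\<in>V. trop_dist s v)"
    unfolding trop_dist_def by (simp add: sum.distrib sum_distrib_left)
  finally show ?thesis unfolding Nv_def m_def .
qed

lemma median_FW:
  fixes C :: "(real^'n) set"
  assumes "finite C" "s0 \<in> C"
  shows "trop_median C \<in> FW C"
proof -
  define V where "V = trop_vertices (FW C)"
  have vs: "is_trop_vertex_set (FW C) V" unfolding V_def by (rule the_vs[OF assms])
  have fV: "finite V" and VA: "V \<subseteq> FW C" and gV: "\<forall>y\<in>FW C. trop_comb V y"
    using vs unfolding is_trop_vertex_set_def by blast+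
  obtain y0 where "y0 \<in> FW C" using FW_nonempty[OF assms] by blast
  hence ne: "V \<noteq> {}" using gV unfolding trop_comb_def by blast
  define Nv where "Nv = real (card V)"
  have Nv0: "0 < Nv" unfolding Nv_def using fV ne by (simp add: card_gt_0_iff)
  define m where "m = (1 / Nv) *\<^sub>R (\<Sum>v\<in>V. v)"
  have med: "trop_median C = m" unfolding trop_median_def m_def Nv_def V_def by (simp add: Let_def)
  have "fwcost C m \<le> fwcost C z" for z
  proof -
    have "Nv * fwcost C m = (\<Sum>s\<in>C. Nv * trop_dist s m)"
      unfolding fwcost_def by (simp add: sum_distrib_left)
    also have "\<dots> \<le> (\<Sum>s\<in>C. \<Sum>v\<in>V. trop_dist s v)"
      by (rule sum_mono) (use td_mean[OF fV ne] in \<open>simp add: Nv_def m_def\<close>)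
    also have "\<dots> = (\<Sum>v\<in>V. fwcost C v)" unfolding fwcost_def by (rule sum.swap)
    also have "\<dots> \<le> (\<Sum>v\<in>V. fwcost C z)"
      by (rule sum_mono) (use VA in \<open>auto simp: FW_iff\<close>)
    also have "\<dots> = Nv * fwcost C z" by (simp add: Nv_def)
    finally show ?thesis using Nv0 by simp
  qed
  thus ?thesis unfolding med FW_iff by blast
qed

lemma assign_prop:
  assumes "0 < k"
  shows "assign k c s < k \<and> (\<forall>i<k. trop_dist s (c (assign k c s)) \<le> trop_dist s (c i))"
proof -
  define M where "M = Min ((\<lambda>i. trop_dist s (c i)) ` {..<k})"
  have "M \<in> (\<lambda>i. trop_dist s (c i)) ` {..<k}" unfolding M_def
    by (rule Min_in) (use assms in auto)
  then obtain j where j: "j < k" "trop_dist s (c j) = M" by auto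
  have "\<forall>i<k. trop_dist s (c j) \<le> trop_dist s (c i)"
    unfolding j(2) M_def by (auto intro: Min_le)
  hence "\<exists>j. j < k \<and> (\<forall>i<k. trop_dist s (c j) \<le> trop_dist s (c i))" using j(1) by blast
  thus ?thesis unfolding assign_def by (rule LeastI_ex)
qed

lemma assign_least:
  "j < k \<Longrightarrow> (\<forall>i<k. trop_dist s (c j) \<le> trop_dist s (c i)) \<Longrightarrow> assign k c s \<le> j"
  unfolding assign_def by (rule Least_le) simp

lemma step_med:
  assumes "0 < k" "s \<in> S"
  shows "kmeans_step S k c (assign k c s) = trop_median {x\<in>S. assign k c x = assign k c s}"
proof -
  have "assign k c s < k" using assign_prop[OF assms(1)] by blast
  moreover have "cluster S k c (assign k c s) \<noteq> {}" using assms(2) unfolding cluster_def by blast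
  ultimately show ?thesis unfolding kmeans_step_def cluster_def by simp
qed

lemma Mstep:
  fixes S :: "(real^'n) set"
  assumes fS: "finite S" and k: "0 < k"
  shows "(\<Sum>s\<in>S. trop_dist s (kmeans_step S k c (assign k c s))) \<le> (\<Sum>s\<in>S. trop_dist s (c (assign k c s)))"
proof -
  let ?a = "assign k c"
  let ?c' = "kmeans_step S k c"
  have img: "?a ` S \<subseteq> {..<k}" using assign_prop[OF k] by blast
  have "(\<Sum>s\<in>S. trop_dist s (?c' (?a s))) = (\<Sum>j\<in>{..<k}. \<Sum>s\<in>{x\<in>S. ?a x = j}. trop_dist s (?c' (?a s)))"
    by (rule sum.group[symmetric, OF fS _ img]) simp
  also have "\<dots> \<le> (\<Sum>j\<in>{..<k}. \<Sum>s\<in>{x\<in>S. ?a x = j}. trop_dist s (c (?a s)))"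
  proof (rule sum_mono)
    fix j assume "j \<in> {..<k}"
    hence jk: "j < k" by simp
    define Cl where "Cl = {x\<in>S. ?a x = j}"
    have fCl: "finite Cl" unfolding Cl_def using fS by simp
    show "(\<Sum>s\<in>{x\<in>S. ?a x = j}. trop_dist s (?c' (?a s))) \<le> (\<Sum>s\<in>{x\<in>S. ?a x = j}. trop_dist s (c (?a s)))"
    proof (cases "Cl = {}")
      case True
      hence "{x\<in>S. ?a x = j} = {}" unfolding Cl_def .
      thus ?thesis by (simp only: sum.empty order.refl)
    next
      case False
      then obtain s0 where s0: "s0 \<in> Cl" by blast
      have cj: "?c' j = trop_median Cl"
        using False jk unfolding kmeans_step_def cluster_def Cl_def by simp
      have "(\<Sum>s\<in>Cl. trop_dist s (?c' (?a s))) = fwcost Cl (trop_median Cl)"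
        unfolding fwcost_def cj[symmetric] by (rule sum.cong) (simp_all add: Cl_def)
      also have "\<dots> \<le> fwcost Cl (c j)" using median_FW[OF fCl s0] by (simp add: FW_iff)
      also have "\<dots> = (\<Sum>s\<in>Cl. trop_dist s (c (?a s)))"
        unfolding fwcost_def by (rule sum.cong) (simp_all add: Cl_def)
      finally show ?thesis unfolding Cl_def .
    qed
  qed
  also have "\<dots> = (\<Sum>s\<in>S. trop_dist s (c (?a s)))"
    by (rule sum.group[OF fS _ img]) simp
  finally show ?thesis .
qed

lemma Astep:
  fixes S :: "(real^'n) set"
  assumes k: "0 < k" and b: "\<forall>s\<in>S. b s < k"
  shows "(\<Sum>s\<in>S. trop_dist s (c (assign k c s))) \<le> (\<Sum>s\<in>S. trop_dist s (c (b s)))"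
  by (rule sum_mono) (use assign_prop[OF k] b in blast)

theorem mainTheorem2:
  fixes S :: "(real^'n) set" and k :: nat and c0 :: "nat \<Rightarrow> real^'n"
  assumes "finite S"
    and "\<forall>x\<in>S. \<forall>y\<in>S. (\<exists>a::real. y = x + a *\<^sub>R one_vec) \<longrightarrow> x = y"
    and "0 < k" and "k \<le> card S"
  shows "kmeans_terminates S k c0"
proof (rule ccontr)
  assume nt: "\<not> kmeans_terminates S k c0"
  note fS = assms(1) and k = assms(3)
  define c where "c = centroids S k c0"
  define a where "a = (\<lambda>t. assign k (c t))"
  have cS: "c (Suc t) = kmeans_step S k (c t)" for t by (simp add: c_def centroids_def)
  define F where "F = (\<lambda>b :: real^'n \<Rightarrow> nat. \<Sum>s\<in>S. trop_dist s (trop_median {x\<in>S. b x = b s}))"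
  have Fcong: "F b = F b'" if "\<forall>x\<in>S. b x = b' x" for b b'
  proof -
    have "{x\<in>S. b x = b s} = {x\<in>S. b' x = b' s}" if "s \<in> S" for s using that \<open>\<forall>x\<in>S. b x = b' x\<close> by auto
    thus ?thesis unfolding F_def by (intro sum.cong) auto
  qed
  have ak: "\<forall>s\<in>S. a t s < k" for t using assign_prop[OF k] unfolding a_def by blast
  have cost: "(\<Sum>s\<in>S. trop_dist s (c (Suc t) (a t s))) = F (a t)" for t
    unfolding F_def cS a_def by (rule sum.cong) (simp_all add: step_med[OF k])
  have ne: "\<exists>s\<in>S. a (Suc t) s \<noteq> a t s" for t
    using nt unfolding kmeans_terminates_def a_def c_def by blast
  have step: "F (a (Suc t)) < F (a t) \<or> (F (a (Suc t)) = F (a t) \<and> (\<Sum>s\<in>S. a (Suc t) s) < (\<Sum>s\<in>S. a t s))" for t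
  proof -
    define X where "X = (\<Sum>s\<in>S. trop_dist s (c (Suc t) (a (Suc t) s)))"
    define Y where "Y = (\<Sum>s\<in>S. trop_dist s (c (Suc t) (a t s)))"
    have "F (a (Suc t)) = (\<Sum>s\<in>S. trop_dist s (kmeans_step S k (c (Suc t)) (assign k (c (Suc t)) s)))"
      using cost[of "Suc t"] unfolding cS[of "Suc t"] a_def by simp
    also have "\<dots> \<le> X" unfolding X_def a_def by (rule Mstep[OF fS k])
    finally have FX: "F (a (Suc t)) \<le> X" .
    have XY: "X \<le> Y" unfolding X_def Y_def a_def by (rule Astep[OF k]) (use ak in \<open>simp add: a_def\<close>)
    have YF: "Y = F (a t)" unfolding Y_def by (rule cost)
    show ?thesis
    proof (cases "F (a (Suc t)) < F (a t)")
      case True thus ?thesis by blast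
    next
      case False
      hence eq: "F (a (Suc t)) = F (a t)" using FX XY YF by linarith
      hence XYe: "X = Y" using FX XY YF by linarith
      have pw: "trop_dist s (c (Suc t) (a (Suc t) s)) \<le> trop_dist s (c (Suc t) (a t s))" if "s \<in> S" for s
        using assign_prop[OF k, of "c (Suc t)" s] ak[of t] that unfolding a_def by blast
      have pw2: "trop_dist s (c (Suc t) (a t s)) \<le> trop_dist s (c (Suc t) (a (Suc t) s))" if "s \<in> S" for s
      proof (rule ccontr)
        assume "\<not> ?thesis"
        hence lt: "trop_dist s (c (Suc t) (a (Suc t) s)) < trop_dist s (c (Suc t) (a t s))"
          using pw[OF that] by linarith
        have "X < Y" unfolding X_def Y_def
        proof (rule sum_strict_mono_ex1[OF fS])
          show "\<forall>x\<in>S. trop_dist x (c (Suc t) (a (Suc t) x)) \<le> trop_dist x (c (Suc t) (a t x))"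
            using pw by blast
          show "\<exists>x\<in>S. trop_dist x (c (Suc t) (a (Suc t) x)) < trop_dist x (c (Suc t) (a t x))"
            using lt that by blast
        qed
        thus False using XYe by simp
      qed
      have le: "a (Suc t) s \<le> a t s" if "s \<in> S" for s
      proof -
        have "\<forall>i<k. trop_dist s (c (Suc t) (a t s)) \<le> trop_dist s (c (Suc t) i)"
        proof (intro allI impI)
          fix i assume "i < k"
          hence "trop_dist s (c (Suc t) (a (Suc t) s)) \<le> trop_dist s (c (Suc t) i)"
            using assign_prop[OF k, of "c (Suc t)" s] unfolding a_def by blast
          thus "trop_dist s (c (Suc t) (a t s)) \<le> trop_dist s (c (Suc t) i)"
            using pw2[OF that] by linarith
        qed
        moreover have "a t s < k" using ak that by blast
        ultimately have "assign k (c (Suc t)) s \<le> a t s" by (intro assign_least)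
        thus ?thesis unfolding a_def .
      qed
      obtain s1 where s1: "s1 \<in> S" "a (Suc t) s1 \<noteq> a t s1" using ne by blast
      have "(\<Sum>s\<in>S. a (Suc t) s) < (\<Sum>s\<in>S. a t s)"
      proof (rule sum_strict_mono_ex1[OF fS])
        show "\<forall>x\<in>S. a (Suc t) x \<le> a t x" using le by blast
        have "a (Suc t) s1 < a t s1" using le[OF s1(1)] s1(2) by linarith
        thus "\<exists>x\<in>S. a (Suc t) x < a t x" using s1(1) by blast
      qed
      thus ?thesis using eq by blast
    qed
  qed
  define R where "R = (\<lambda>t. F (a t))"
  define Q where "Q = (\<lambda>t. \<Sum>s\<in>S. a t s)"
  have lex: "R (t + Suc d) < R t \<or> (R (t + Suc d) = R t \<and> Q (t + Suc d) < Q t)" for t d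
  proof (induction d)
    case 0 thus ?case using step[of t] unfolding R_def Q_def by simp
  next
    case (Suc d)
    have "R (Suc (t + Suc d)) < R (t + Suc d) \<or> (R (Suc (t + Suc d)) = R (t + Suc d) \<and> Q (Suc (t + Suc d)) < Q (t + Suc d))"
      using step[of "t + Suc d"] unfolding R_def Q_def by simp
    thus ?case using Suc.IH by auto
  qed
  define h where "h = (\<lambda>t. restrict (a t) S)"
  have "inj h"
  proof (rule injI)
    fix t t' assume "h t = h t'"
    have agree: "\<forall>x\<in>S. a t x = a t' x"
    proof
      fix x assume "x \<in> S"
      have "h t x = h t' x" using \<open>h t = h t'\<close> by simp
      thus "a t x = a t' x" using \<open>x \<in> S\<close> unfolding h_def by simp
    qed
    show "t = t'"
    proof (rule ccontr)
      assume "t \<noteq> t'"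
      hence "t < t' \<or> t' < t" by (rule nat_neq_iff[THEN iffD1])
      thus False
      proof (elim disjE)
        assume "t < t'"
        then obtain d where d0: "t' = Suc (t + d)" using less_imp_Suc_add by blast
        have d: "t' = t + Suc d" using d0 by simp
        have "R t = R t'" unfolding R_def by (rule Fcong) (rule agree)
        moreover have "Q t = Q t'" unfolding Q_def using agree by (intro sum.cong) auto
        moreover have "R t' < R t \<or> (R t' = R t \<and> Q t' < Q t)" using lex[of t d] unfolding d .
        ultimately show False by linarith
      next
        assume "t' < t"
        then obtain d where d0: "t = Suc (t' + d)" using less_imp_Suc_add by blast
        have d: "t = t' + Suc d" using d0 by simp
        have "R t = R t'" unfolding R_def by (rule Fcong) (rule agree)
        moreover have "Q t = Q t'" unfolding Q_def using agree by (intro sum.cong) auto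
        moreover have "R t < R t' \<or> (R t = R t' \<and> Q t < Q t')" using lex[of t' d] unfolding d .
        ultimately show False by linarith
      qed
    qed
  qed
  moreover have "range h \<subseteq> PiE S (\<lambda>_. {..<k})"
  proof
    fix f assume "f \<in> range h"
    then obtain t where "f = h t" by blast
    thus "f \<in> PiE S (\<lambda>_. {..<k})" unfolding h_def using ak[of t] by (simp add: restrict_PiE_iff)
  qed
  hence "finite (range h)" by (rule finite_subset) (simp add: fS finite_PiE)
  ultimately have "finite (UNIV :: nat set)" by (intro finite_imageD[of h]) 
  thus False by simp
qed

end
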